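(* Let $n\ge1$ and let $\mathfrak{h}$ be the complex vector space with basis $\{\beta^1,\dots,\beta^n,\alpha^1,\dots,\alpha^n\}$ and symmetric bilinear form with $(\beta^i,\beta^j)=\delta_{ij}$, $(\alpha^i,\alpha^j)=\delta_{ij}$, $(\beta^i,\alpha^j)=0$. Let $M(1)$ be the Heisenberg vertex operator algebra associated with $\mathfrak{h}$, and identify the commutative associative algebra $M(1)/C_2(M(1))$ with $\mathbb{C}[\zeta_1,\dots,\zeta_n,x_1,\dots,x_n]$ via $\alpha^i(-1)\mathbf{1}+C_2(M(1))\mapsto\zeta_i$, $\beta^i(-1)\mathbf{1}+C_2(M(1))\mapsto x_i$. For $i\in\{1,\dots,n\}$ define the linear map $f_i:M(1)\to M(1)$, $f_i(a)=\beta^i(1)a-\alpha^i(-1)a$. Then for $1\le k\le n$, the subspace $\sum_{i=1}^{k}f_i(M(1))+C_2(M(1))$ is an $MZ_{0,-1}$-subspace of $M(1)$ if and only if $\sum_{i=1}^{k}(\partial_{x_i}-\zeta_i)\mathbb{C}[\zeta_1,\dots,\zeta_n,x_1,\dots,x_n]$ is a Mathieu-Zhao subspace of $\mathbb{C}[\zeta_1,\dots,\zeta_n,x_1,\dots,x_n]$.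
   Context: Heisenberg VOA: for $\mathfrak{h}$ with nondegenerate symmetric form, $\hat{\mathfrak{h}}=\mathfrak{h}\otimes\mathbb{C}[t,t^{-1}]\oplus\mathbb{C}c$ with $[x\otimes t^m,y\otimes t^{p}]=(x,y)m\delta_{m+p,0}c$, $c$ central; $M(1)=U(\hat{\mathfrak{h}})\otimes_{U(\mathfrak{h}\otimes\mathbb{C}[t]\oplus\mathbb{C}c)}\mathbb{C}$ ($\mathfrak{h}\otimes\mathbb{C}[t]$ acting by $0$, $c$ by $1$), $\alpha(m)$ denotes the action of $\alpha\otimes t^m$, and $Y(\alpha(-1)\mathbf{1},z)=\sum_m\alpha(m)z^{-m-1}$, with vertex operators of general elements given by normal-ordered products; vacuum $\mathbf{1}=1\otimes1$. In particular $(\alpha(-1)\mathbf{1})_m=\alpha(m)$. $C_2(V)=\operatorname{span}\{u_{-2}v\}$, and $V/C_2(V)$ is a commutative associative algebra with product $(a+C_2)(b+C_2)=a_{-1}b+C_2$. Iterated products are nested to the right. For a subspace $M\subseteq V$ of a vertex algebra: $r_{0,-1}(M)$ is the set of $v$ for which there is $m\ge 0$ with $v_{n_1}\cdots v_{n_t}v\in M$ for all $t\ge m$, $n_i\in\{0,-1\}$; $lsr_{0,-1}(M)$ is the set of $v$ such that for every $b\in V$ there is $m\ge0$ with $b_sv_{n_1}\cdots v_{n_t}v\in M$ for all $t\ge m$, $s,n_i\in\{0,-1\}$; $rsr_{0,-1}(M)$ is the set of $v$ such that for every $w\in V$ there is $m\ge0$ with $(v_{n_1}\cdots v_{n_t}v)_sw\in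 M$ for all $t\ge m$, $s,n_i\in\{0,-1\}$; $sr_{0,-1}=lsr_{0,-1}\cap rsr_{0,-1}$; $M$ is an $MZ_{0,-1}$-subspace if $r_{0,-1}(M)=sr_{0,-1}(M)$. For a commutative associative unital algebra $A$ and a subspace $U$: $r(U)=\{a:\exists m\ge1,\ a^t\in U\ \forall t\ge m\}$, $sr(U)=\{a:\forall b,c\in A\ \exists m\ge1,\ ba^tc\in U\ \forall t\ge m\}$; $U$ is Mathieu-Zhao if $r(U)=sr(U)$. *)

theory Defs
  imports Complex_Main "HOL-Library.Poly_Mapping"
begin

type_synonym 'v cpoly = "('v \<Rightarrow>\<^sub>0 nat) \<Rightarrow>\<^sub>0 complex"

definition cconst :: "complex \<Rightarrow> 'v cpoly" where
  "cconst c = Poly_Mapping.single 0 c"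

definition cvar :: "'v \<Rightarrow> 'v cpoly" where
  "cvar v = Poly_Mapping.single (Poly_Mapping.single v 1) 1"

definition cpderiv :: "'v \<Rightarrow> 'v cpoly \<Rightarrow> 'v cpoly" where
  "cpderiv v p = (\<Sum>mu\<in>Poly_Mapping.keys p.
      Poly_Mapping.single (mu - Poly_Mapping.single v 1)
        (of_nat (Poly_Mapping.lookup mu v) * (Poly_Mapping.lookup p mu :: complex)))"

definition poly_in :: "'v set \<Rightarrow> 'v cpoly set" where
  "poly_in X = {p. \<forall>mu\<in>Poly_Mapping.keys p. Poly_Mapping.keys mu \<subseteq> X}"

text \<open>A sum over all indices with nonzero summand (used for sums that are
  finite when applied to a vector).\<close>
definition fsum :: "(nat \<Rightarrow> 'a::comm_monoid_add) \<Rightarrow> 'a" where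
  "fsum f = (\<Sum>j\<in>{j. f j \<noteq> 0}. f j)"

text \<open>We fix an orthonormal basis h_0,...,h_{N-1} of the space h (here
  N = 2n).  As a vector space M(1) is the polynomial algebra in the variables
  (j,k), where the variable (j,k) stands for h_j(-(k+1)); the vacuum is the
  constant polynomial 1.  Thus vectors of M(1) are the elements of type
  (nat * nat) cpoly whose variables (j,k) all satisfy j < N.\<close>

type_synonym heis = "(nat \<times> nat) cpoly"

definition heis_space :: "nat \<Rightarrow> heis set" where
  "heis_space N = poly_in {v. fst v < N}"

text \<open>The action of h_j(k) on M(1): creation (k<0) is multiplication by the
  variable; annihilation (k>0) is k times the partial derivative
  (since [h_j(k), h_j(-k)] = k); h_j(0) acts as 0.\<close>
definition hmode :: "nat \<Rightarrow> int \<Rightarrow> heis \<Rightarrow> heis" where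
  "hmode j k w =
     (if k < 0 then cvar (j, nat (-k) - 1) * w
      else if k > 0 then cconst (of_int k) * cpderiv (j, nat k - 1) w
      else 0)"

text \<open>Modes of the vertex operator of a monomial vector, via the normal ordered
  product  Y(h_j(-m)u, z) = : (1/(m-1)!) (d/dz)^(m-1) h_j(z) Y(u,z) : .
  Expanding modes, for m >= 1:
    (h_j(-m)u)_s w = sum_{l>=0} C(m+l-1,l) [ h_j(-m-l) (u_{s+l} w)
                                             - (-1)^m u_{s-m-l} (h_j(l) w) ]
  and the vacuum satisfies 1_s w = delta_{s,-1} w.  The first argument is a
  fuel equal to the degree of the monomial.\<close>
primrec monop_aux :: "nat \<Rightarrow> ((nat \<times> nat) \<Rightarrow>\<^sub>0 nat) \<Rightarrow> int \<Rightarrow> heis \<Rightarrow> heis" where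
  "monop_aux 0 mu s w = (if s = -1 then w else 0)"
| "monop_aux (Suc d) mu s w =
     (let v = (SOME v. v \<in> Poly_Mapping.keys mu); j = fst v; m = snd v + 1;
          mu' = mu - Poly_Mapping.single v 1
      in fsum (\<lambda>l. cconst (of_nat ((m + l - 1) choose l)) *
                    (hmode j (- int m - int l) (monop_aux d mu' (s + int l) w)
                     - cconst ((-1) ^ m) *
                       monop_aux d mu' (s - int m - int l) (hmode j (int l) w))))"

definition monop :: "((nat \<times> nat) \<Rightarrow>\<^sub>0 nat) \<Rightarrow> int \<Rightarrow> heis \<Rightarrow> heis" where
  "monop mu = monop_aux (\<Sum>v\<in>Poly_Mapping.keys mu. Poly_Mapping.lookup mu v) mu"

text \<open>vop u s w  =  u_s w  (the s-th mode of Y(u,z) applied to w), extended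
  linearly in u.\<close>
definition vop :: "heis \<Rightarrow> int \<Rightarrow> heis \<Rightarrow> heis" where
  "vop u s w = (\<Sum>mu\<in>Poly_Mapping.keys u. cconst (Poly_Mapping.lookup u mu) * monop mu s w)"

definition C2 :: "nat \<Rightarrow> heis set" where
  "C2 N = {(\<Sum>l<L. cconst (c l) * vop (u l) (-2) (v l)) | L c u v.
             \<forall>l<(L::nat). u l \<in> heis_space N \<and> v l \<in> heis_space N}"

definition iterp :: "heis \<Rightarrow> int list \<Rightarrow> heis" where
  "iterp v ns = foldr (\<lambda>n acc. vop v n acc) ns v"

definition r01 :: "heis set \<Rightarrow> heis set \<Rightarrow> heis set" where
  "r01 V M = {v \<in> V. \<exists>m::nat. \<forall>ns. set ns \<subseteq> {0, -1} \<and> length ns \<ge> m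
                 \<longrightarrow> iterp v ns \<in> M}"

definition lsr01 :: "heis set \<Rightarrow> heis set \<Rightarrow> heis set" where
  "lsr01 V M = {v \<in> V. \<forall>b\<in>V. \<exists>m::nat. \<forall>ns s. set ns \<subseteq> {0, -1} \<and> s \<in> {0, -1}
                 \<and> length ns \<ge> m \<longrightarrow> vop b s (iterp v ns) \<in> M}"

definition rsr01 :: "heis set \<Rightarrow> heis set \<Rightarrow> heis set" where
  "rsr01 V M = {v \<in> V. \<forall>w\<in>V. \<exists>m::nat. \<forall>ns s. set ns \<subseteq> {0, -1} \<and> s \<in> {0, -1}
                 \<and> length ns \<ge> m \<longrightarrow> vop (iterp v ns) s w \<in> M}"

definition sr01 :: "heis set \<Rightarrow> heis set \<Rightarrow> heis set" where
  "sr01 V M = lsr01 V M \<inter> rsr01 V M"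

definition MZ01_subspace :: "heis set \<Rightarrow> heis set \<Rightarrow> bool" where
  "MZ01_subspace V M \<longleftrightarrow> r01 V M = sr01 V M"

definition rad_comm :: "'a::comm_ring_1 set \<Rightarrow> 'a set \<Rightarrow> 'a set" where
  "rad_comm A U = {a \<in> A. \<exists>m::nat\<ge>1. \<forall>t\<ge>m. a ^ t \<in> U}"

definition srad_comm :: "'a::comm_ring_1 set \<Rightarrow> 'a set \<Rightarrow> 'a set" where
  "srad_comm A U = {a \<in> A. \<forall>b\<in>A. \<forall>c\<in>A. \<exists>m::nat\<ge>1. \<forall>t\<ge>m. b * a ^ t * c \<in> U}"

definition MZ_subspace :: "'a::comm_ring_1 set \<Rightarrow> 'a set \<Rightarrow> bool" where
  "MZ_subspace A U \<longleftrightarrow> rad_comm A U = srad_comm A U"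

text \<open>Basis of h (dimension 2n): beta^i is h_{i-1}, alpha^i is h_{n+i-1},
  for 1 <= i <= n.  Correspondingly the polynomial algebra
  C[zeta_1..zeta_n, x_1..x_n] has variables 0..2n-1 with x_i = variable i-1
  (image of beta^i(-1)1) and zeta_i = variable n+i-1 (image of alpha^i(-1)1).\<close>

definition beta_idx :: "nat \<Rightarrow> nat \<Rightarrow> nat" where "beta_idx n i = i - 1"
definition alpha_idx :: "nat \<Rightarrow> nat \<Rightarrow> nat" where "alpha_idx n i = n + i - 1"

definition Mone :: "nat \<Rightarrow> heis set" where "Mone n = heis_space (2 * n)"

definition fmap :: "nat \<Rightarrow> nat \<Rightarrow> heis \<Rightarrow> heis" where
  "fmap n i a = hmode (beta_idx n i) 1 a - hmode (alpha_idx n i) (-1) a"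

definition Wsub :: "nat \<Rightarrow> nat \<Rightarrow> heis set" where
  "Wsub n k = {(\<Sum>i\<in>{1..k}. fmap n i (a i)) + c | a c.
                 (\<forall>i\<in>{1..k}. a i \<in> Mone n) \<and> c \<in> C2 (2 * n)}"

definition Apoly :: "nat \<Rightarrow> nat cpoly set" where
  "Apoly n = poly_in {v. v < 2 * n}"

definition xvar :: "nat \<Rightarrow> nat \<Rightarrow> nat" where "xvar n i = beta_idx n i"
definition zetavar :: "nat \<Rightarrow> nat \<Rightarrow> nat" where "zetavar n i = alpha_idx n i"

definition Usub :: "nat \<Rightarrow> nat \<Rightarrow> nat cpoly set" where
  "Usub n k = {(\<Sum>i\<in>{1..k}. cpderiv (xvar n i) (g i) - cvar (zetavar n i) * g i) | g.
                 \<forall>i\<in>{1..k}. g i \<in> Apoly n}"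

end

theory Submission
  imports Defs
begin


abbreviation lk where "lk \<equiv> Poly_Mapping.lookup"
abbreviation ks where "ks \<equiv> Poly_Mapping.keys"
abbreviation sg where "sg \<equiv> Poly_Mapping.single"

definition lext :: "('m \<Rightarrow> complex \<Rightarrow> 'r::ab_group_add) \<Rightarrow> ('m \<Rightarrow>\<^sub>0 complex) \<Rightarrow> 'r" where
  "lext F p = (\<Sum>mu\<in>ks p. F mu (lk p mu))"

definition addc :: "('m \<Rightarrow> complex \<Rightarrow> 'r::ab_group_add) \<Rightarrow> bool" where
  "addc F \<longleftrightarrow> (\<forall>mu a b. F mu (a+b) = F mu a + F mu b)"

lemma addc_zero: "addc F \<Longrightarrow> F mu 0 = 0"
  unfolding addc_def by (metis add_0 add_cancel_right_right)

lemma lext_superset: assumes "addc F" "finite S" "ks p \<subseteq> S"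
  shows "lext F p = (\<Sum>mu\<in>S. F mu (lk p mu))"
  unfolding lext_def using assms by (intro sum.mono_neutral_left) (auto simp: addc_zero in_keys_iff)

lemma lext_add: assumes "addc F" shows "lext F (p + q) = lext F p + lext F q"
proof -
  let ?S = "ks p \<union> ks q"
  have "lext F (p+q) = (\<Sum>mu\<in>?S. F mu (lk (p+q) mu))"
    using keys_add[of p q] by (intro lext_superset[OF assms]) auto
  also have "\<dots> = (\<Sum>mu\<in>?S. F mu (lk p mu)) + (\<Sum>mu\<in>?S. F mu (lk q mu))"
    using assms by (simp add: lookup_add addc_def sum.distrib)
  also have "\<dots> = lext F p + lext F q" using lext_superset[OF assms, of ?S] by simp
  finally show ?thesis .
qed

lemma lext_zero[simp]: "lext F 0 = 0" by (simp add: lext_def)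

lemma lext_single: "addc F \<Longrightarrow> lext F (sg mu c) = F mu c"
  by (simp add: lext_def addc_zero)

lemma lext_diff: assumes "addc F" shows "lext F (p - q) = lext F p - lext F q"
  using lext_add[OF assms, of "p - q" q] by (simp add: algebra_simps)

lemma lext_uminus: assumes "addc F" shows "lext F (- p) = - lext F p"
  using lext_diff[OF assms, of 0 p] by simp

lemma lext_sum: assumes "addc F" shows "lext F (sum f S) = (\<Sum>x\<in>S. lext F (f x))"
  by (induction S rule: infinite_finite_induct) (auto simp: lext_add[OF assms])

lemma poly_expand: "p = (\<Sum>mu\<in>ks p. sg mu (lk p mu))"
proof (rule poly_mapping_eqI)
  fix k
  have "lk (\<Sum>mu\<in>ks p. sg mu (lk p mu)) k = (\<Sum>mu\<in>ks p. (if mu = k then lk p k else 0))"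
    unfolding lookup_sum by (intro sum.cong) (auto simp: lookup_single when_def)
  also have "\<dots> = lk p k" by (simp add: in_keys_iff)
  finally show "lk p k = lk (\<Sum>mu\<in>ks p. sg mu (lk p mu)) k" by simp
qed

lemma poly_induct[case_names zero single add]:
  fixes p :: "'a \<Rightarrow>\<^sub>0 'b::comm_monoid_add"
  assumes "P 0" "\<And>mu c. P (sg mu c)" "\<And>p q. P p \<Longrightarrow> P q \<Longrightarrow> P (p + q)"
  shows "P p"
proof -
  have "P (\<Sum>mu\<in>S. sg mu (lk p mu))" if "finite S" for S
    using that by (induction S rule: finite_induct) (auto simp: assms)
  then show ?thesis using poly_expand[of p] by (metis finite_keys)
qed

lemma lext_eqI:
  assumes "addc F" "\<And>p q. G (p + q) = G p + G q" "\<And>mu c. G (sg mu c) = F mu c"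
  shows "lext F p = G p"
proof (induction p rule: poly_induct)
  case zero
  have "G 0 = G 0 + G 0" using assms(2)[of 0 0] by simp
  then show ?case by simp
next
  case (single mu c) then show ?case by (simp add: lext_single assms)
next
  case (add p q) then show ?case by (simp add: lext_add assms)
qed

lemma keys_diff_sub: "ks (p - q) \<subseteq> ks p \<union> ks q"
  by (auto simp: in_keys_iff lookup_minus)

lemma poly_in_zero[simp]: "0 \<in> poly_in X" by (simp add: poly_in_def)
lemma poly_in_add: "p \<in> poly_in X \<Longrightarrow> q \<in> poly_in X \<Longrightarrow> p + q \<in> poly_in X"
  unfolding poly_in_def using keys_add[of p q] by blast
lemma poly_in_diff: "p \<in> poly_in X \<Longrightarrow> q \<in> poly_in X \<Longrightarrow> p - q \<in> poly_in X"
  unfolding poly_in_def using keys_diff_sub[of p q] by blast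
lemma poly_in_sum: "(\<And>i. i \<in> S \<Longrightarrow> f i \<in> poly_in X) \<Longrightarrow> sum f S \<in> poly_in X"
  by (induction S rule: infinite_finite_induct) (auto intro: poly_in_add)

lemma keys_add_nat: "ks ((a::'v \<Rightarrow>\<^sub>0 nat) + b) = ks a \<union> ks b"
  by (auto simp: in_keys_iff lookup_add)

lemma poly_in_mult: "p \<in> poly_in X \<Longrightarrow> q \<in> poly_in X \<Longrightarrow> p * q \<in> poly_in X"
  unfolding poly_in_def using keys_mult[of p q] by (force simp: keys_add_nat)

lemma poly_in_single: "ks mu \<subseteq> X \<Longrightarrow> sg mu c \<in> poly_in X"
  by (simp add: poly_in_def)

lemma poly_in_cconst[simp]: "cconst c \<in> poly_in X"
  by (simp add: cconst_def poly_in_def)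

lemma poly_in_cvar: "v \<in> X \<Longrightarrow> cvar v \<in> poly_in X"
  by (simp add: cvar_def poly_in_def)

lemma poly_in_one[simp]: "1 \<in> poly_in X"
  by (simp add: poly_in_def)

lemma keys_minus_single_sub: "ks (mu - sg v (1::nat)) \<subseteq> ks mu"
  by (auto simp: in_keys_iff lookup_minus)

lemma cpderiv_lext: "cpderiv v p = lext (\<lambda>mu c. sg (mu - sg v 1) (of_nat (lk mu v) * c)) p"
  by (simp add: cpderiv_def lext_def)

lemma addc_cpd: "addc (\<lambda>mu c. sg (mu - sg v 1) (of_nat (lk mu v) * (c::complex)))"
  by (simp add: addc_def distrib_left single_add)

lemma keys_cpderiv: "ks (cpderiv v p) \<subseteq> {mu - sg v 1 | mu. mu \<in> ks p \<and> v \<in> ks mu}"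
  unfolding cpderiv_def using keys_sum by (fastforce simp: in_keys_iff split: if_splits)

lemma poly_in_cpderiv: "p \<in> poly_in X \<Longrightarrow> cpderiv v p \<in> poly_in X"
  unfolding poly_in_def using keys_cpderiv[of v p] keys_minus_single_sub by fastforce

lemma cpderiv_zero[simp]: "cpderiv v 0 = 0" by (simp add: cpderiv_def)

lemma cpderiv_add: "cpderiv v (p + q) = cpderiv v p + cpderiv v q"
  unfolding cpderiv_lext by (rule lext_add[OF addc_cpd])

lemma cpderiv_diff: "cpderiv v (p - q) = cpderiv v p - cpderiv v q"
  unfolding cpderiv_lext by (rule lext_diff[OF addc_cpd])

lemma cpderiv_single: "cpderiv v (sg mu c) = sg (mu - sg v 1) (of_nat (lk mu v) * c)"
  unfolding cpderiv_lext by (rule lext_single[OF addc_cpd])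

lemma cconst_mult_single: "cconst c * sg mu d = sg mu (c * d)"
  by (simp add: cconst_def mult_single)

lemma cconst_mult_cconst: "cconst c * (cconst d * x) = cconst (c * d) * x"
  by (simp add: cconst_def mult_single flip: mult.assoc)

lemma cconst_one[simp]: "cconst 1 = 1" by (simp add: cconst_def)
lemma cconst_zero[simp]: "cconst 0 = 0" by (simp add: cconst_def)

lemma keys_cconst_mult: "ks (cconst c * x) \<subseteq> ks x"
  using keys_mult[of "cconst c" x] by (auto simp: cconst_def split: if_splits)

lemma poly_in_fsum: "(\<And>l. f l \<in> poly_in X) \<Longrightarrow> fsum f \<in> poly_in X"
  unfolding fsum_def by (rule poly_in_sum) auto

lemma fsum_zero: "(\<And>l. f l = 0) \<Longrightarrow> fsum f = 0"
  by (simp add: fsum_def)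

lemma fsum_bound: assumes "\<And>l. B < l \<Longrightarrow> f l = 0" shows "fsum f = (\<Sum>l\<le>B. f l)"
  unfolding fsum_def
proof (rule sum.mono_neutral_left)
  show "{j. f j \<noteq> 0} \<subseteq> {..B}" using assms by (auto simp: not_le[symmetric])
qed auto



type_synonym mono = "(nat \<times> nat) \<Rightarrow>\<^sub>0 nat"

definition good :: "mono \<Rightarrow> bool" where "good mu \<longleftrightarrow> (\<forall>v\<in>ks mu. snd v = 0)"

definition proj :: "mono \<Rightarrow> (nat \<Rightarrow>\<^sub>0 nat)" where
  "proj mu = Poly_Mapping.map_key (\<lambda>j. (j, 0::nat)) mu"

lemma inj_j0: "inj (\<lambda>j::nat. (j, 0::nat))" by (auto simp: inj_def)

lemma lookup_proj[simp]: "lk (proj mu) j = lk mu (j, 0)"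
  by (simp add: proj_def map_key.rep_eq[OF inj_j0])

lemma keys_proj: "ks (proj mu) = {j. (j,0) \<in> ks mu}"
  by (auto simp: in_keys_iff)

lemma proj_add: "proj (a + b) = proj a + proj b"
  by (rule poly_mapping_eqI) (simp add: lookup_add)

lemma proj_zero[simp]: "proj 0 = 0"
  by (rule poly_mapping_eqI) simp

lemma good_add: "good (a + b) \<longleftrightarrow> good a \<and> good b"
  by (auto simp: good_def keys_add_nat)

lemma good_zero[simp]: "good 0" by (simp add: good_def)

definition pim :: "mono \<Rightarrow> complex \<Rightarrow> nat cpoly" where
  "pim mu c = (if good mu then sg (proj mu) c else 0)"

definition piH :: "heis \<Rightarrow> nat cpoly" where "piH = lext pim"

lemma addc_pim: "addc pim" by (simp add: addc_def pim_def single_add)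

lemma piH_add: "piH (p + q) = piH p + piH q" by (simp add: piH_def lext_add addc_pim)
lemma piH_diff: "piH (p - q) = piH p - piH q" by (simp add: piH_def lext_diff addc_pim)
lemma piH_zero[simp]: "piH 0 = 0" by (simp add: piH_def)
lemma piH_sum: "piH (sum f S) = (\<Sum>x\<in>S. piH (f x))" by (simp add: piH_def lext_sum addc_pim)
lemma piH_single: "piH (sg mu c) = (if good mu then sg (proj mu) c else 0)"
  by (simp add: piH_def lext_single addc_pim pim_def)

lemma piH_mult: "piH (p * q) = piH p * piH q"
proof (induction p rule: poly_induct)
  case zero then show ?case by simp
next
  case (single mu c)
  show ?case
  proof (induction q rule: poly_induct)
    case zero then show ?case by simp
  next
    case (single nu d)
    then show ?case by (simp add: mult_single piH_single good_add proj_add)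
  next
    case (add p q)
    then show ?case by (simp add: distrib_left piH_add)
  qed
next
  case (add p q)
  then show ?case by (simp add: distrib_right piH_add)
qed

lemma piH_cconst[simp]: "piH (cconst c) = cconst c"
  by (simp add: cconst_def piH_single)

lemma piH_one[simp]: "piH 1 = 1"
  using piH_cconst[of 1] by simp

lemma piH_cconst_mult: "piH (cconst c * x) = cconst c * piH x"
  by (simp add: piH_mult)

lemma piH_cvar: "piH (cvar (j,k)) = (if k = 0 then cvar j else 0)"
proof -
  have g: "good (sg (j,k) 1) \<longleftrightarrow> k = 0" by (simp add: good_def)
  have p: "proj (sg (j,0) 1) = sg j 1"
    by (rule poly_mapping_eqI) (simp add: lookup_single when_def)
  show ?thesis unfolding cvar_def piH_single using g p by simp
qed

lemma proj_inj_good: assumes "good a" "good b" "proj a = proj b" shows "a = b"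
proof (rule poly_mapping_eqI)
  fix v :: "nat \<times> nat"
  obtain j k where v: "v = (j,k)" by (cases v)
  show "lk a v = lk b v"
  proof (cases "k = 0")
    case True
    have "lk (proj a) j = lk (proj b) j" using assms(3) by simp
    then show ?thesis using True v by simp
  next
    case False
    then have "v \<notin> ks a" "v \<notin> ks b" using assms(1,2) v by (auto simp: good_def)
    then show ?thesis by (simp add: in_keys_iff)
  qed
qed

lemma piH_zero_bad: assumes "piH x = 0" "mu \<in> ks x" shows "\<not> good mu"
proof
  assume gm: "good mu"
  have "lk (piH x) (proj mu) = (\<Sum>nu\<in>ks x. lk (pim nu (lk x nu)) (proj mu))"
    by (simp add: piH_def lext_def lookup_sum)
  also have "\<dots> = (\<Sum>nu\<in>ks x. if nu = mu then lk x mu else 0)"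
  proof (rule sum.cong)
    fix nu assume "nu \<in> ks x"
    show "lk (pim nu (lk x nu)) (proj mu) = (if nu = mu then lk x mu else 0)"
      using proj_inj_good[of nu mu] gm by (auto simp: pim_def lookup_single when_def)
  qed simp
  also have "\<dots> = lk x mu" using assms(2) by simp
  finally have "lk x mu = 0" using assms(1) by simp
  then show False using assms(2) by (simp add: in_keys_iff)
qed

lemma piH_cpderiv: "piH (cpderiv (j,0) a) = cpderiv j (piH a)"
proof (induction a rule: poly_induct)
  case zero then show ?case by simp
next
  case (add p q) then show ?case by (simp add: cpderiv_add piH_add)
next
  case (single mu c)
  show ?case
  proof (cases "good mu")
    case True
    have g: "good (mu - sg (j,0) 1)" using True keys_minus_single_sub[of mu "(j,0)"] unfolding good_def by blast
    have p: "proj (mu - sg (j,0) 1) = proj mu - sg j 1"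
      by (rule poly_mapping_eqI) (simp add: lookup_minus lookup_single when_def)
    show ?thesis using True g p by (simp add: cpderiv_single piH_single)
  next
    case False
    then obtain v where v: "v \<in> ks mu" "snd v \<noteq> 0" by (auto simp: good_def)
    show ?thesis
    proof (cases "lk mu (j,0) = 0")
      case True then show ?thesis using False by (simp add: cpderiv_single piH_single)
    next
      case False2: False
      have "v \<noteq> (j,0)" using v by auto
      then have "v \<in> ks (mu - sg (j,0) 1)" using v(1) by (simp add: in_keys_iff lookup_minus lookup_single when_def)
      then have "\<not> good (mu - sg (j,0) 1)" using v(2) by (auto simp: good_def)
      then show ?thesis using False by (simp add: cpderiv_single piH_single)
    qed
  qed
qed



lemma hmode_zero[simp]: "hmode j k 0 = 0" by (simp add: hmode_def)
lemma hmode_0[simp]: "hmode j 0 x = 0" by (simp add: hmode_def)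
lemma hmode_neg: "hmode j (- int (a + 1) - int l) x = cvar (j, a + l) * x"
proof -
  have "nat (- (- int (a + 1) - int l)) = a + l + 1" by (simp add: nat_eq_iff)
  then show ?thesis unfolding hmode_def by simp
qed
lemma hmode_pos: "1 \<le> l \<Longrightarrow> hmode j (int l) x = cconst (of_nat l) * cpderiv (j, l - 1) x"
  by (simp add: hmode_def)

definition lin :: "((nat \<times> nat) \<Rightarrow> nat) \<Rightarrow> mono \<Rightarrow> nat" where
  "lin g mu = (\<Sum>v\<in>ks mu. lk mu v * g v)"

abbreviation deg where "deg \<equiv> lin (\<lambda>_. 1)"
abbreviation wt where "wt \<equiv> lin (\<lambda>v. snd v + 1)"

lemma lin_superset: "finite S \<Longrightarrow> ks mu \<subseteq> S \<Longrightarrow> lin g mu = (\<Sum>v\<in>S. lk mu v * g v)"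
  unfolding lin_def by (intro sum.mono_neutral_left) (auto simp: in_keys_iff)

lemma lin_minus_single: assumes "v \<in> ks mu" shows "lin g (mu - sg v 1) + g v = lin g mu"
proof -
  have f: "finite (ks mu)" by simp
  have "lin g (mu - sg v 1) = (\<Sum>x\<in>ks mu. lk (mu - sg v 1) x * g x)"
    by (rule lin_superset[OF f keys_minus_single_sub])
  also have "\<dots> = lk (mu - sg v 1) v * g v + (\<Sum>x\<in>ks mu - {v}. lk (mu - sg v 1) x * g x)"
    using assms by (simp add: sum.remove)
  also have "(\<Sum>x\<in>ks mu - {v}. lk (mu - sg v 1) x * g x) = (\<Sum>x\<in>ks mu - {v}. lk mu x * g x)"
    by (intro sum.cong) (auto simp: lookup_minus lookup_single when_def)
  finally have 1: "lin g (mu - sg v 1) = (lk mu v - 1) * g v + (\<Sum>x\<in>ks mu - {v}. lk mu x * g x)"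
    by (simp add: lookup_minus)
  have 2: "lin g mu = lk mu v * g v + (\<Sum>x\<in>ks mu - {v}. lk mu x * g x)"
    unfolding lin_def using assms by (simp add: sum.remove)
  have "lk mu v \<ge> 1" using assms by (simp add: in_keys_iff)
  then obtain k where "lk mu v = Suc k" by (cases "lk mu v") auto
  then have "(lk mu v - 1) * g v + g v = lk mu v * g v" by simp
  then show ?thesis using 1 2 by linarith
qed

lemma lin_ge: assumes "v \<in> ks mu" shows "g v \<le> lin g mu"
proof -
  have "g v \<le> lk mu v * g v" using assms by (simp add: in_keys_iff)
  also have "\<dots> \<le> lin g mu" unfolding lin_def using assms
    by (intro member_le_sum[where f="\<lambda>x. lk mu x * g x"]) auto
  finally show ?thesis .
qed

lemma deg_zero: "deg mu = 0 \<Longrightarrow> mu = 0"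
proof -
  assume "deg mu = 0"
  then have "ks mu = {}" using lin_ge[of _ mu "\<lambda>_. 1"] by fastforce
  then show "mu = 0" by simp
qed

lemma mu_decomp: "v \<in> ks mu \<Longrightarrow> mu = (mu - sg v 1) + sg v (1::nat)"
  by (rule poly_mapping_eqI) (auto simp: lookup_add lookup_minus lookup_single when_def in_keys_iff)

definition term_l :: "nat \<Rightarrow> (nat \<times> nat) \<Rightarrow> mono \<Rightarrow> int \<Rightarrow> heis \<Rightarrow> nat \<Rightarrow> heis" where
  "term_l d v mu s w l = cconst (of_nat ((snd v + 1 + l - 1) choose l)) *
     (hmode (fst v) (- int (snd v + 1) - int l) (monop_aux d (mu - sg v 1) (s + int l) w)
      - cconst ((-1) ^ (snd v + 1)) *
        monop_aux d (mu - sg v 1) (s - int (snd v + 1) - int l) (hmode (fst v) (int l) w))"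

lemma monop_Suc: "monop_aux (Suc d) mu s w = fsum (term_l d (SOME v. v \<in> ks mu) mu s w)"
  by (simp only: monop_aux.simps Let_def term_l_def[abs_def])

lemma monop_zero_arg[simp]: "monop_aux d mu s 0 = 0"
proof (induction d arbitrary: mu s)
  case 0 then show ?case by simp
next
  case (Suc d)
  show ?case unfolding monop_Suc by (rule fsum_zero) (simp add: term_l_def Suc)
qed

lemma piH_fsum0: "(\<And>l. piH (f l) = 0) \<Longrightarrow> piH (fsum f) = 0"
  by (simp add: fsum_def piH_sum)

lemma piH_cvar_mult: "piH (cvar (j,k) * x) = (if k = 0 then cvar j * piH x else 0)"
  by (simp add: piH_mult piH_cvar)

lemma lemA: "s \<le> -2 \<or> s = 0 \<Longrightarrow> piH (monop_aux d mu s w) = 0"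
proof (induction d arbitrary: mu s w)
  case 0 then show ?case by auto
next
  case (Suc d)
  define v where "v = (SOME v. v \<in> ks mu)"
  show ?case unfolding monop_Suc v_def[symmetric]
  proof (rule piH_fsum0)
    fix l
    have a: "piH (hmode (fst v) (- int (snd v + 1) - int l) (monop_aux d (mu - sg v 1) (s + int l) w)) = 0"
    proof (cases "snd v + l = 0")
      case True
      then have "l = 0" by simp
      then show ?thesis unfolding hmode_neg using Suc True by (simp add: piH_cvar_mult)
    next
      case False
      then show ?thesis unfolding hmode_neg piH_cvar_mult by auto
    qed
    have b: "piH (monop_aux d (mu - sg v 1) (s - int (snd v + 1) - int l) (hmode (fst v) (int l) w)) = 0"
    proof (cases "l = 0")
      case True
      then show ?thesis by simp
    next
      case False
      then show ?thesis using Suc by (intro Suc.IH) auto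
    qed
    show "piH (term_l d v mu s w l) = 0"
      unfolding term_l_def piH_cconst_mult piH_diff a b by simp
  qed
qed



lemma hmode_pos_keys:
  assumes "1 \<le> l" "\<forall>nu\<in>ks w. wt nu \<le> b" "nu \<in> ks (hmode j (int l) w)"
  shows "wt nu + l \<le> b"
proof -
  have "ks (hmode j (int l) w) \<subseteq> ks (cpderiv (j, l - 1) w)"
    unfolding hmode_pos[OF assms(1)] by (rule keys_cconst_mult)
  then have "nu \<in> ks (cpderiv (j, l - 1) w)" using assms(3) by (rule subsetD)
  then have "nu \<in> {mu - sg (j, l - 1) 1 | mu. mu \<in> ks w \<and> (j, l - 1) \<in> ks mu}"
    by (rule subsetD[OF keys_cpderiv])
  then obtain mu where mu: "nu = mu - sg (j, l - 1) 1" "mu \<in> ks w" "(j, l - 1) \<in> ks mu"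
    by auto
  have "wt nu + (snd (j, l - 1) + 1) = wt mu" unfolding mu(1) by (rule lin_minus_single[OF mu(3)])
  moreover have "snd (j, l - 1) + 1 = l" using assms(1) by simp
  moreover have "wt mu \<le> b" using assms(2) mu(2) by blast
  ultimately show ?thesis by linarith
qed

lemma some_in_keys: "deg mu = Suc d \<Longrightarrow> (SOME v. v \<in> ks mu) \<in> ks mu"
proof -
  assume "deg mu = Suc d"
  then have "ks mu \<noteq> {}" unfolding lin_def by (metis nat.distinct(1) sum.empty)
  then show ?thesis by (simp add: some_in_eq)
qed

lemma deg_minus: "v \<in> ks mu \<Longrightarrow> deg mu = Suc d \<Longrightarrow> deg (mu - sg v 1) = d"
  using lin_minus_single[of v mu "\<lambda>_. 1"] by simp

lemma lemD: "deg mu = d \<Longrightarrow> \<forall>nu\<in>ks w. wt nu \<le> b \<Longrightarrow> int (wt mu + b) \<le> s \<Longrightarrow> monop_aux d mu s w = 0"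
proof (induction d arbitrary: mu s w b)
  case 0 then show ?case by auto
next
  case (Suc d)
  define v where "v = (SOME v. v \<in> ks mu)"
  have v: "v \<in> ks mu" unfolding v_def by (rule some_in_keys[OF Suc.prems(1)])
  have dm: "deg (mu - sg v 1) = d" using deg_minus[OF v Suc.prems(1)] .
  have wm: "wt (mu - sg v 1) + (snd v + 1) = wt mu" using lin_minus_single[OF v] .
  show ?case unfolding monop_Suc v_def[symmetric]
  proof (rule fsum_zero)
    fix l
    have t1: "monop_aux d (mu - sg v 1) (s + int l) w = 0"
      using Suc.prems wm by (intro Suc.IH[OF dm, of w b]) auto
    have t2: "monop_aux d (mu - sg v 1) (s - int (snd v + 1) - int l) (hmode (fst v) (int l) w) = 0"
    proof (cases "l = 0")
      case True then show ?thesis by simp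
    next
      case False
      then have l1: "1 \<le> l" by simp
      show ?thesis
      proof (cases "b < l")
        case True
        have "ks (hmode (fst v) (int l) w) = {}"
          using hmode_pos_keys[OF l1 Suc.prems(2)] True by fastforce
        then show ?thesis by simp
      next
        case False
        have "\<forall>nu\<in>ks (hmode (fst v) (int l) w). wt nu \<le> b - l"
          using hmode_pos_keys[OF l1 Suc.prems(2)] by fastforce
        moreover have "int (wt (mu - sg v 1) + (b - l)) \<le> s - int (snd v + 1) - int l"
          using Suc.prems(3) wm False by simp
        ultimately show ?thesis by (intro Suc.IH[OF dm]) auto
      qed
    qed
    show "term_l d v mu s w l = 0" unfolding term_l_def t1 t2 by simp
  qed
qed

lemma wt_bound: "\<exists>b. \<forall>nu\<in>ks w. wt nu \<le> b"
  by (rule exI[of _ "\<Sum>nu\<in>ks w. wt nu"]) (auto intro: member_le_sum)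

lemma sg_mu_decomp: "v \<in> ks mu \<Longrightarrow> sg mu (1::complex) = sg (mu - sg v 1) 1 * cvar v"
  unfolding cvar_def mult_single using mu_decomp[of v mu] by simp

lemma lemC: "deg mu = d \<Longrightarrow> piH (monop_aux d mu (-1) w) = piH (sg mu 1) * piH w"
proof (induction d arbitrary: mu w)
  case 0
  then have "mu = 0" by (intro deg_zero) simp
  then show ?case by simp
next
  case (Suc d)
  define v where "v = (SOME v. v \<in> ks mu)"
  have v: "v \<in> ks mu" unfolding v_def by (rule some_in_keys[OF Suc.prems(1)])
  have dm: "deg (mu - sg v 1) = d" using deg_minus[OF v Suc.prems(1)] .
  have wm: "wt (mu - sg v 1) + (snd v + 1) = wt mu" using lin_minus_single[OF v] .
  obtain b where b: "\<forall>nu\<in>ks w. wt nu \<le> b" using wt_bound by blast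
  define B where "B = wt (mu - sg v 1) + b + 1"
  have vanish: "term_l d v mu (-1) w l = 0" if "B < l" for l
  proof -
    have t1: "monop_aux d (mu - sg v 1) (-1 + int l) w = 0"
      using that b unfolding B_def by (intro lemD[OF dm, of w b]) auto
    have l1: "1 \<le> l" using that B_def by simp
    have "ks (hmode (fst v) (int l) w) = {}"
      using hmode_pos_keys[OF l1 b] that B_def by fastforce
    then have t2: "hmode (fst v) (int l) w = 0" by simp
    show ?thesis unfolding term_l_def t1 t2 by simp
  qed
  define X where "X = piH (cvar v) * piH (sg (mu - sg v 1) 1) * piH w"
  have each: "piH (term_l d v mu (-1) w l) = (if l = 0 then X else 0)" for l
  proof -
    have low: "piH (monop_aux d (mu - sg v 1) (-1 - int (snd v + 1) - int l) (hmode (fst v) (int l) w)) = 0"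
      by (rule lemA) simp
    have e: "piH (term_l d v mu (-1) w l) = cconst (of_nat ((snd v + 1 + l - 1) choose l)) *
        (piH (cvar (fst v, snd v + l)) * piH (monop_aux d (mu - sg v 1) (-1 + int l) w))"
      unfolding term_l_def hmode_neg piH_cconst_mult piH_diff piH_mult low by simp
    show ?thesis
    proof (cases "l = 0")
      case True
      then show ?thesis using e Suc.IH[OF dm] unfolding X_def by (simp add: mult.assoc)
    next
      case False
      then show ?thesis using e by (simp add: piH_cvar)
    qed
  qed
  have "piH (monop_aux (Suc d) mu (-1) w) = piH (\<Sum>l\<le>B. term_l d v mu (-1) w l)"
    unfolding monop_Suc v_def[symmetric] using vanish by (subst fsum_bound[of B]) auto
  also have "\<dots> = X" unfolding piH_sum each by simp
  also have "\<dots> = piH (sg mu 1) * piH w"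
    unfolding X_def sg_mu_decomp[OF v] piH_mult by (simp add: mult_ac)
  finally show ?case .
qed

lemma hmode_in: "j < N \<Longrightarrow> w \<in> poly_in {v. fst v < N} \<Longrightarrow> hmode j k w \<in> poly_in {v. fst v < N}"
proof -
  assume j: "j < N" and w: "w \<in> poly_in {v. fst v < N}"
  have c: "cvar (j, nat (- k) - 1) \<in> poly_in {v. fst v < N}" using j by (intro poly_in_cvar) simp
  have A: "cvar (j, nat (- k) - 1) * w \<in> poly_in {v. fst v < N}" using poly_in_mult[OF c w] .
  have B: "cconst (of_int k) * cpderiv (j, nat k - 1) w \<in> poly_in {v. fst v < N}"
    using poly_in_mult[OF poly_in_cconst poly_in_cpderiv[OF w]] .
  show ?thesis unfolding hmode_def using A B poly_in_zero by (simp only: split: if_split) blast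
qed

lemma lemF: "deg mu = d \<Longrightarrow> ks mu \<subseteq> {v. fst v < N} \<Longrightarrow> w \<in> poly_in {v. fst v < N}
   \<Longrightarrow> monop_aux d mu s w \<in> poly_in {v. fst v < N}"
proof (induction d arbitrary: mu s w)
  case 0 then show ?case unfolding monop_aux.simps(1) using poly_in_zero by (simp only: split: if_split) blast
next
  case (Suc d)
  define v where "v = (SOME v. v \<in> ks mu)"
  have v: "v \<in> ks mu" unfolding v_def by (rule some_in_keys[OF Suc.prems(1)])
  have dm: "deg (mu - sg v 1) = d" using deg_minus[OF v Suc.prems(1)] .
  have km: "ks (mu - sg v 1) \<subseteq> {v. fst v < N}" using keys_minus_single_sub[of mu v] Suc.prems(2) by (rule subset_trans)
  have j: "fst v < N" using subsetD[OF Suc.prems(2) v] by simp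
  show ?case unfolding monop_Suc v_def[symmetric]
  proof (rule poly_in_fsum)
    fix l
    have a: "monop_aux d (mu - sg v 1) (s + int l) w \<in> poly_in {v. fst v < N}"
      by (rule Suc.IH[OF dm km Suc.prems(3)])
    have b: "hmode (fst v) (int l) w \<in> poly_in {v. fst v < N}" by (rule hmode_in[OF j Suc.prems(3)])
    have c: "monop_aux d (mu - sg v 1) (s - int (snd v + 1) - int l) (hmode (fst v) (int l) w) \<in> poly_in {v. fst v < N}"
      by (rule Suc.IH[OF dm km b])
    show "term_l d v mu s w l \<in> poly_in {v. fst v < N}"
      unfolding term_l_def
      by (rule poly_in_mult[OF poly_in_cconst poly_in_diff[OF hmode_in[OF j a] poly_in_mult[OF poly_in_cconst c]]])
  qed
qed

lemma monop_eq: "monop mu = monop_aux (deg mu) mu"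
  by (simp add: monop_def lin_def)

lemma addc_vop: "addc (\<lambda>mu c. cconst c * monop mu s w)"
  by (simp add: addc_def cconst_def single_add distrib_right)

lemma vop_lext: "vop u s w = lext (\<lambda>mu c. cconst c * monop mu s w) u"
  by (simp add: vop_def lext_def)

lemma piH_vop: "piH (vop u s w) = (\<Sum>mu\<in>ks u. cconst (lk u mu) * piH (monop mu s w))"
  by (simp add: vop_def piH_sum piH_cconst_mult)

lemma piH_vop_low: "s \<le> -2 \<or> s = 0 \<Longrightarrow> piH (vop u s w) = 0"
  unfolding piH_vop monop_eq using lemA by simp

lemma piH_vop_m1: "piH (vop u (-1) w) = piH u * piH w"
proof -
  have "piH (vop u (-1) w) = (\<Sum>mu\<in>ks u. cconst (lk u mu) * (piH (sg mu 1) * piH w))"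
    unfolding piH_vop monop_eq using lemC by simp
  also have "\<dots> = (\<Sum>mu\<in>ks u. piH (sg mu (lk u mu))) * piH w"
    unfolding sum_distrib_right
  proof (rule sum.cong)
    fix mu
    have "sg mu (lk u mu) = cconst (lk u mu) * sg mu 1" by (simp add: cconst_mult_single)
    then show "cconst (lk u mu) * (piH (sg mu 1) * piH w) = piH (sg mu (lk u mu)) * piH w"
      by (simp add: piH_cconst_mult mult.assoc)
  qed simp
  also have "\<dots> = piH u * piH w"
    using poly_expand[of u] by (metis piH_sum)
  finally show ?thesis .
qed

lemma vop_in: "u \<in> heis_space N \<Longrightarrow> w \<in> heis_space N \<Longrightarrow> vop u s w \<in> heis_space N"
proof -
  assume u: "u \<in> heis_space N" and w: "w \<in> heis_space N"
  have "cconst (lk u mu) * monop mu s w \<in> heis_space N" if "mu \<in> ks u" for mu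
  proof -
    have "ks mu \<subseteq> {v. fst v < N}" using u that by (auto simp: heis_space_def poly_in_def)
    then have "monop mu s w \<in> heis_space N" unfolding monop_eq heis_space_def
      using lemF[of mu "deg mu" N w s] w by (simp add: heis_space_def)
    then show ?thesis unfolding heis_space_def by (rule poly_in_mult[OF poly_in_cconst])
  qed
  then show ?thesis unfolding vop_def heis_space_def by (rule poly_in_sum)
qed

lemma vop_cvar: "vop (cvar (j,k)) (-2) w = cconst (of_nat (Suc k)) * (cvar (j, Suc k) * w)"
proof -
  let ?v = "(j,k)"
  have d: "deg (sg ?v 1) = Suc 0" by (simp add: lin_def)
  have s: "(SOME x. x \<in> ks (sg ?v (1::nat))) = ?v" by simp
  have t: "term_l 0 ?v (sg ?v 1) (-2) w l = (if l = 1 then cconst (of_nat (Suc k)) * (cvar (j, Suc k) * w) else 0)" for l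
  proof -
    have "term_l 0 ?v (sg ?v 1) (-2) w l = cconst (of_nat ((k + 1 + l - 1) choose l)) *
       (cvar (j, k + l) * monop_aux 0 (sg ?v 1 - sg ?v 1) (-2 + int l) w)"
      unfolding term_l_def hmode_neg by simp
    then show ?thesis by auto
  qed
  have "vop (cvar ?v) (-2) w = monop (sg ?v 1) (-2) w"
    unfolding vop_lext cvar_def by (simp add: lext_single addc_vop)
  also have "\<dots> = fsum (\<lambda>l. if l = 1 then cconst (of_nat (Suc k)) * (cvar (j, Suc k) * w) else 0)"
    unfolding monop_eq d monop_Suc s t by simp
  also have "\<dots> = cconst (of_nat (Suc k)) * (cvar (j, Suc k) * w)"
    unfolding fsum_def by (cases "cconst (of_nat (Suc k)) * (cvar (j, Suc k) * w) = 0") auto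
  finally show ?thesis .
qed



lemma C2_piH: "x \<in> C2 N \<Longrightarrow> piH x = 0"
  unfolding C2_def by (auto simp: piH_sum piH_cconst_mult piH_vop_low)

lemma C2_zero: "0 \<in> C2 N"
  unfolding C2_def by (rule CollectI, rule exI[of _ 0]) simp

lemma C2_add_gen:
  assumes y: "y \<in> C2 N" and u: "u \<in> heis_space N" and v: "v \<in> heis_space N"
  shows "y + cconst c * vop u (-2) v \<in> C2 N"
proof -
  from y obtain L :: nat and c' u' v' where y': "y = (\<Sum>l<L. cconst (c' l) * vop (u' l) (-2) (v' l))"
    and P: "\<forall>l<L. u' l \<in> heis_space N \<and> v' l \<in> heis_space N"
    using y unfolding C2_def by fast
  let ?c = "c'(L := c)" and ?u = "u'(L := u)" and ?v = "v'(L := v)"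
  have eq: "(\<Sum>l<Suc L. cconst (?c l) * vop (?u l) (-2) (?v l)) = y + cconst c * vop u (-2) v"
  proof -
    have "(\<Sum>l<L. cconst (?c l) * vop (?u l) (-2) (?v l)) = (\<Sum>l<L. cconst (c' l) * vop (u' l) (-2) (v' l))"
      by (rule sum.cong) auto
    then show ?thesis unfolding sum.lessThan_Suc y' by simp
  qed
  have P': "\<forall>l<Suc L. ?u l \<in> heis_space N \<and> ?v l \<in> heis_space N"
    using P u v by (simp add: less_Suc_eq)
  show ?thesis unfolding C2_def mem_Collect_eq
    apply (rule exI[of _ "Suc L"], rule exI[of _ ?c], rule exI[of _ ?u], rule exI[of _ ?v])
    by (intro conjI) (rule eq[symmetric], rule P')
qed

lemma mono_C2form:
  assumes km: "ks mu \<subseteq> {v. fst v < N}" and bad: "\<not> good mu"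
  shows "\<exists>u w c'. u \<in> heis_space N \<and> w \<in> heis_space N \<and> sg mu c = cconst c' * vop u (-2) w"
proof -
  obtain v where v: "v \<in> ks mu" "snd v \<noteq> 0" using bad by (auto simp: good_def)
  obtain j k where jk: "v = (j, Suc k)" using v(2) by (cases v; cases "snd v") auto
  have jN: "j < N" using subsetD[OF km v(1)] jk by simp
  define w where "w = sg (mu - sg v 1) (1::complex)"
  have u_in: "cvar (j,k) \<in> heis_space N" unfolding heis_space_def using jN by (intro poly_in_cvar) simp
  have w_in: "w \<in> heis_space N" unfolding heis_space_def w_def
    using keys_minus_single_sub[of mu v] km by (intro poly_in_single) (rule subset_trans)
  have cw: "cvar (j, Suc k) * w = sg mu 1"
    unfolding w_def cvar_def mult_single using mu_decomp[OF v(1)] jk by (simp add: add.commute)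
  have "cconst (c / of_nat (Suc k)) * vop (cvar (j,k)) (-2) w = sg mu c"
    unfolding vop_cvar cw cconst_mult_cconst cconst_mult_single
    by (simp del: of_nat_Suc)
  then show ?thesis using u_in w_in by metis
qed

lemma C2_sup: assumes x: "x \<in> heis_space N" and z: "piH x = 0" shows "x \<in> C2 N"
proof -
  have main: "(\<Sum>mu\<in>S. sg mu (lk x mu)) \<in> C2 N" if "S \<subseteq> ks x" for S
  proof -
    have "finite S" using that finite_keys by (rule finite_subset)
    then show ?thesis using that
    proof (induction S rule: finite_induct)
      case empty then show ?case by (simp add: C2_zero)
    next
      case (insert mu S)
      have mu: "mu \<in> ks x" using insert.prems by simp
      have S: "S \<subseteq> ks x" using insert.prems by simp
      have km: "ks mu \<subseteq> {v. fst v < N}" using x mu unfolding heis_space_def poly_in_def mem_Collect_eq by (rule bspec)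
      obtain u w c' where uw: "u \<in> heis_space N" "w \<in> heis_space N"
        "sg mu (lk x mu) = cconst c' * vop u (-2) w"
        using mono_C2form[OF km piH_zero_bad[OF z mu]] by blast
      have "(\<Sum>mu\<in>S. sg mu (lk x mu)) + cconst c' * vop u (-2) w \<in> C2 N"
        by (rule C2_add_gen[OF insert.IH[OF S] uw(1,2)])
      moreover have "(\<Sum>mu\<in>insert mu S. sg mu (lk x mu)) = (\<Sum>mu\<in>S. sg mu (lk x mu)) + cconst c' * vop u (-2) w"
        unfolding sum.insert[OF insert.hyps] uw(3) by (rule add.commute)
      ultimately show ?case by simp
    qed
  qed
  have "x = (\<Sum>mu\<in>ks x. sg mu (lk x mu))" by (rule poly_expand)
  also have "\<dots> \<in> C2 N" by (rule main) (rule order_refl)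
  finally show ?thesis .
qed

lemma piH_fmap: "piH (fmap n i a) = cpderiv (i - 1) (piH a) - cvar (n + i - 1) * piH a"
proof -
  have 1: "hmode j 1 a = cpderiv (j, 0) a" for j by (simp add: hmode_def)
  have 2: "hmode j (-1) a = cvar (j, 0) * a" for j by (simp add: hmode_def)
  show ?thesis unfolding fmap_def beta_idx_def alpha_idx_def 1 2 piH_diff piH_cpderiv piH_cvar_mult
    by simp
qed

lemma fmap_in: assumes a: "a \<in> heis_space (2*n)" and i: "1 \<le> i" "i \<le> n"
  shows "fmap n i a \<in> heis_space (2*n)"
proof -
  have 1: "hmode j 1 a = cpderiv (j, 0) a" for j by (simp add: hmode_def)
  have 2: "hmode j (-1) a = cvar (j, 0) * a" for j by (simp add: hmode_def)
  have c: "cvar (n + i - 1, 0) \<in> poly_in {v. fst v < 2*n}" using i by (intro poly_in_cvar) simp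
  show ?thesis using a unfolding fmap_def beta_idx_def alpha_idx_def 1 2 heis_space_def
    by (intro poly_in_diff poly_in_cpderiv poly_in_mult[OF c])
qed

definition lift :: "(nat \<Rightarrow>\<^sub>0 nat) \<Rightarrow> mono" where
  "lift nu = Abs_poly_mapping (\<lambda>v. if snd v = 0 then lk nu (fst v) else 0)"

lemma lookup_lift: "lk (lift nu) v = (if snd v = 0 then lk nu (fst v) else 0)"
proof -
  have "{v. (if snd v = 0 then lk nu (fst v) else 0) \<noteq> 0} \<subseteq> (\<lambda>j. (j, 0)) ` ks nu"
  proof
    fix v assume "v \<in> {v. (if snd v = 0 then lk nu (fst v) else 0) \<noteq> 0}"
    then have h: "snd v = 0" "fst v \<in> ks nu" by (simp_all add: in_keys_iff split: if_splits)
    have "v = (fst v, 0)" using h(1) by (cases v) simp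
    then show "v \<in> (\<lambda>j. (j, 0)) ` ks nu" using h(2) by (rule image_eqI)
  qed
  then have "finite {v. (if snd v = 0 then lk nu (fst v) else 0) \<noteq> 0}"
    using finite_keys by (rule finite_subset[OF _ finite_imageI])
  then show ?thesis unfolding lift_def by (rule lookup_Abs_poly_mapping[THEN fun_cong])
qed

lemma good_lift: "good (lift nu)"
  unfolding good_def
proof
  fix v assume "v \<in> ks (lift nu)"
  then have "lk (lift nu) v \<noteq> 0" by (simp add: in_keys_iff)
  then show "snd v = 0" unfolding lookup_lift by (simp split: if_splits)
qed

lemma proj_lift: "proj (lift nu) = nu"
  by (rule poly_mapping_eqI) (simp add: lookup_lift)

lemma keys_lift: "ks (lift nu) \<subseteq> {v. fst v \<in> ks nu}"
proof
  fix v assume "v \<in> ks (lift nu)"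
  then have "lk (lift nu) v \<noteq> 0" by (simp add: in_keys_iff)
  then show "v \<in> {v. fst v \<in> ks nu}" unfolding lookup_lift by (simp add: in_keys_iff split: if_splits)
qed

definition sigma :: "nat cpoly \<Rightarrow> heis" where
  "sigma g = (\<Sum>nu\<in>ks g. sg (lift nu) (lk g nu))"

lemma piH_sigma: "piH (sigma g) = g"
  unfolding sigma_def piH_sum piH_single using good_lift proj_lift poly_expand[of g] by simp

lemma sigma_in: assumes "g \<in> poly_in {v. v < N}" shows "sigma g \<in> heis_space N"
  unfolding sigma_def heis_space_def
proof (rule poly_in_sum)
  fix nu assume nu: "nu \<in> ks g"
  have "ks (lift nu) \<subseteq> {v. fst v < N}"
    using keys_lift[of nu] assms nu unfolding poly_in_def by auto
  then show "sg (lift nu) (lk g nu) \<in> poly_in {v. fst v < N}" by (rule poly_in_single)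
qed

lemma piH_in: assumes "x \<in> heis_space N" shows "piH x \<in> poly_in {v. v < N}"
  unfolding piH_def lext_def
proof (rule poly_in_sum)
  fix mu assume mu: "mu \<in> ks x"
  have "ks (proj mu) \<subseteq> {v. v < N}"
    using assms mu unfolding heis_space_def poly_in_def keys_proj by fastforce
  then show "pim mu (lk x mu) \<in> poly_in {v. v < N}"
    unfolding pim_def using poly_in_single poly_in_zero by (simp only: split: if_split) blast
qed



lemma W1: assumes "x \<in> Wsub n k" shows "piH x \<in> Usub n k"
proof -
  obtain a c where x: "x = (\<Sum>i\<in>{1..k}. fmap n i (a i)) + c"
    and a: "\<forall>i\<in>{1..k}. a i \<in> Mone n" and c: "c \<in> C2 (2 * n)"
    using assms unfolding Wsub_def by blast
  have "piH x = (\<Sum>i\<in>{1..k}. cpderiv (xvar n i) (piH (a i)) - cvar (zetavar n i) * piH (a i))"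
    unfolding x piH_add piH_sum piH_fmap C2_piH[OF c] xvar_def zetavar_def beta_idx_def alpha_idx_def
    by simp
  moreover have "\<forall>i\<in>{1..k}. piH (a i) \<in> Apoly n"
    using a unfolding Mone_def Apoly_def by (blast intro: piH_in)
  ultimately show ?thesis unfolding Usub_def mem_Collect_eq
    by (intro exI[of _ "\<lambda>i. piH (a i)"] conjI)
qed

lemma W2: assumes kn: "k \<le> n" and x: "x \<in> Mone n" and u: "piH x \<in> Usub n k"
  shows "x \<in> Wsub n k"
proof -
  obtain g where px: "piH x = (\<Sum>i\<in>{1..k}. cpderiv (xvar n i) (g i) - cvar (zetavar n i) * g i)"
    and g: "\<forall>i\<in>{1..k}. g i \<in> Apoly n"
    using u unfolding Usub_def by blast
  define a where "a i = sigma (g i)" for i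
  have a: "\<forall>i\<in>{1..k}. a i \<in> Mone n"
    using g unfolding a_def Mone_def Apoly_def by (blast intro: sigma_in)
  define c where "c = x - (\<Sum>i\<in>{1..k}. fmap n i (a i))"
  have fin: "(\<Sum>i\<in>{1..k}. fmap n i (a i)) \<in> heis_space (2 * n)"
    unfolding heis_space_def
  proof (rule poly_in_sum)
    fix i assume i: "i \<in> {1..k}"
    show "fmap n i (a i) \<in> poly_in {v. fst v < 2 * n}"
      using fmap_in[of "a i" n i] a i kn unfolding Mone_def heis_space_def by simp
  qed
  have cin: "c \<in> heis_space (2 * n)"
    using x fin unfolding c_def Mone_def heis_space_def by (rule poly_in_diff)
  have "piH c = 0"
    unfolding c_def piH_diff piH_sum piH_fmap px a_def piH_sigma xvar_def zetavar_def beta_idx_def alpha_idx_def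
    by simp
  then have "c \<in> C2 (2 * n)" using cin by (intro C2_sup) 
  moreover have "x = (\<Sum>i\<in>{1..k}. fmap n i (a i)) + c" unfolding c_def by simp
  ultimately show ?thesis using a unfolding Wsub_def by blast
qed

lemma iterp_Nil[simp]: "iterp v [] = v" by (simp add: iterp_def)
lemma iterp_Cons[simp]: "iterp v (m # ns) = vop v m (iterp v ns)" by (simp add: iterp_def)

lemma iterp_in: "v \<in> heis_space N \<Longrightarrow> iterp v ns \<in> heis_space N"
proof (induction ns)
  case Nil then show ?case by simp
next
  case (Cons m ns) then show ?case unfolding iterp_Cons by (intro vop_in)
qed

lemma piH_iterp: "set ns \<subseteq> {0, -1} \<Longrightarrow> piH (iterp v ns) = (if 0 \<in> set ns then 0 else piH v ^ (length ns + 1))"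
proof (induction ns)
  case Nil then show ?case by simp
next
  case (Cons m ns)
  then have IH: "piH (iterp v ns) = (if 0 \<in> set ns then 0 else piH v ^ (length ns + 1))" by simp
  from Cons.prems have "m = 0 \<or> m = -1" by simp
  then show ?case
  proof
    assume "m = 0" then show ?thesis by (simp add: piH_vop_low)
  next
    assume m: "m = -1"
    show ?thesis unfolding iterp_Cons m piH_vop_m1 IH using m by simp
  qed
qed

lemma piH_iterp_rep: "piH (iterp v (replicate t (-1))) = piH v ^ (t + 1)"
  by (subst piH_iterp) auto


lemma MU: "k \<le> n \<Longrightarrow> x \<in> Mone n \<Longrightarrow> x \<in> Wsub n k \<longleftrightarrow> piH x \<in> Usub n k"
  using W1 W2 by blast

lemma U0: "0 \<in> Usub n k"
  unfolding Usub_def mem_Collect_eq Apoly_def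
  by (intro exI[of _ "\<lambda>i. 0"] conjI) (simp_all add: poly_in_zero)

lemma rep_props: "set (replicate t (-1::int)) \<subseteq> {0, -1}" "length (replicate t (-1::int)) = t"
  by auto

lemma r01_char: assumes kn: "k \<le> n"
  shows "x \<in> r01 (Mone n) (Wsub n k) \<longleftrightarrow> x \<in> Mone n \<and> piH x \<in> rad_comm (Apoly n) (Usub n k)"
proof
  assume "x \<in> r01 (Mone n) (Wsub n k)"
  then obtain m where xV: "x \<in> Mone n"
    and h: "\<forall>ns. set ns \<subseteq> {0, -1} \<and> length ns \<ge> m \<longrightarrow> iterp x ns \<in> Wsub n k"
    unfolding r01_def by blast
  have "piH x ^ t \<in> Usub n k" if t: "t \<ge> Suc m" for t
  proof -
    have "iterp x (replicate (t - 1) (-1)) \<in> Wsub n k" using h rep_props t by auto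
    then have "piH (iterp x (replicate (t - 1) (-1))) \<in> Usub n k" by (rule W1)
    then show ?thesis unfolding piH_iterp_rep using t by simp
  qed
  moreover have "piH x \<in> Apoly n" using xV unfolding Mone_def Apoly_def by (rule piH_in)
  ultimately show "x \<in> Mone n \<and> piH x \<in> rad_comm (Apoly n) (Usub n k)"
    unfolding rad_comm_def using xV by (intro conjI CollectI) (auto intro!: exI[of _ "Suc m"])
next
  assume "x \<in> Mone n \<and> piH x \<in> rad_comm (Apoly n) (Usub n k)"
  then obtain m where xV: "x \<in> Mone n" and h: "\<forall>t\<ge>m. piH x ^ t \<in> Usub n k"
    unfolding rad_comm_def by blast
  have "iterp x ns \<in> Wsub n k" if ns: "set ns \<subseteq> {0, -1}" "length ns \<ge> m" for ns
  proof -
    have iV: "iterp x ns \<in> Mone n" using xV unfolding Mone_def by (rule iterp_in)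
    have p: "piH x ^ (length ns + 1) \<in> Usub n k" using h ns(2) le_add1 le_trans by blast
    have "piH (iterp x ns) \<in> Usub n k"
      unfolding piH_iterp[OF ns(1)] using p U0 by (simp only: split: if_split) blast
    then show ?thesis using MU[OF kn iV] by simp
  qed
  then show "x \<in> r01 (Mone n) (Wsub n k)" unfolding r01_def using xV by blast
qed

lemma Apoly_mult: "a \<in> Apoly n \<Longrightarrow> b \<in> Apoly n \<Longrightarrow> a * b \<in> Apoly n"
  unfolding Apoly_def by (rule poly_in_mult)

lemma sr01_char: assumes kn: "k \<le> n"
  shows "x \<in> sr01 (Mone n) (Wsub n k) \<longleftrightarrow> x \<in> Mone n \<and> piH x \<in> srad_comm (Apoly n) (Usub n k)"
proof
  assume "x \<in> sr01 (Mone n) (Wsub n k)"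
  then have xV: "x \<in> Mone n"
    and h: "\<forall>b\<in>Mone n. \<exists>m::nat. \<forall>ns s. set ns \<subseteq> {0, -1} \<and> s \<in> {0, -1}
                 \<and> length ns \<ge> m \<longrightarrow> vop b s (iterp x ns) \<in> Wsub n k"
    unfolding sr01_def lsr01_def by blast+
  have ax: "piH x \<in> Apoly n" using xV unfolding Mone_def Apoly_def by (rule piH_in)
  have "\<exists>m\<ge>1. \<forall>t\<ge>m. b * piH x ^ t * c \<in> Usub n k" if b: "b \<in> Apoly n" and c: "c \<in> Apoly n" for b c
  proof -
    have bcV: "sigma (b * c) \<in> Mone n" using Apoly_mult[OF b c] unfolding Mone_def Apoly_def by (rule sigma_in)
    obtain m where hm: "\<forall>ns s. set ns \<subseteq> {0, -1} \<and> s \<in> {0, -1} \<and> length ns \<ge> m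
        \<longrightarrow> vop (sigma (b * c)) s (iterp x ns) \<in> Wsub n k"
      using h bcV by blast
    have "b * piH x ^ t * c \<in> Usub n k" if t: "t \<ge> Suc m" for t
    proof -
      have "vop (sigma (b * c)) (-1) (iterp x (replicate (t - 1) (-1))) \<in> Wsub n k"
        using hm rep_props t by auto
      then have "piH (vop (sigma (b * c)) (-1) (iterp x (replicate (t - 1) (-1)))) \<in> Usub n k" by (rule W1)
      then show ?thesis unfolding piH_vop_m1 piH_iterp_rep piH_sigma using t by (simp add: mult_ac)
    qed
    then show ?thesis by (intro exI[of _ "Suc m"]) auto
  qed
  then show "x \<in> Mone n \<and> piH x \<in> srad_comm (Apoly n) (Usub n k)"
    unfolding srad_comm_def using xV ax by blast
next
  assume "x \<in> Mone n \<and> piH x \<in> srad_comm (Apoly n) (Usub n k)"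
  then have xV: "x \<in> Mone n"
    and h: "\<forall>b\<in>Apoly n. \<forall>c\<in>Apoly n. \<exists>m::nat\<ge>1. \<forall>t\<ge>m. b * piH x ^ t * c \<in> Usub n k"
    unfolding srad_comm_def by blast+
  have one: "1 \<in> Apoly n" unfolding Apoly_def by (rule poly_in_one)
  have L: "x \<in> lsr01 (Mone n) (Wsub n k)"
    unfolding lsr01_def
  proof (intro CollectI conjI ballI xV)
    fix b assume bV: "b \<in> Mone n"
    have pb: "piH b \<in> Apoly n" using bV unfolding Mone_def Apoly_def by (rule piH_in)
    obtain m where hm: "\<forall>t\<ge>m. piH b * piH x ^ t * 1 \<in> Usub n k" using h pb one by blast
    have "vop b s (iterp x ns) \<in> Wsub n k" if ns: "set ns \<subseteq> {0, -1}" "s \<in> {0, -1}" "length ns \<ge> m" for ns s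
    proof -
      have vV: "vop b s (iterp x ns) \<in> Mone n"
        using bV iterp_in[of x "2*n" ns] xV unfolding Mone_def by (intro vop_in)
      have "piH (vop b s (iterp x ns)) \<in> Usub n k"
      proof (cases "s = 0")
        case True then show ?thesis using piH_vop_low U0 by simp
      next
        case False
        then have s: "s = -1" using ns(2) by simp
        have p: "piH b * piH x ^ (length ns + 1) * 1 \<in> Usub n k" using hm ns(3) le_add1 le_trans by blast
        have z: "piH b * 0 \<in> Usub n k" using U0 by simp
        show ?thesis unfolding s piH_vop_m1 piH_iterp[OF ns(1)] using p z
          by (simp only: mult_1_right split: if_split) blast
      qed
      then show ?thesis using MU[OF kn vV] by simp
    qed
    then show "\<exists>m. \<forall>ns s. set ns \<subseteq> {0, -1} \<and> s \<in> {0, -1} \<and> length ns \<ge> m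
        \<longrightarrow> vop b s (iterp x ns) \<in> Wsub n k" by blast
  qed
  have R: "x \<in> rsr01 (Mone n) (Wsub n k)"
    unfolding rsr01_def
  proof (intro CollectI conjI ballI xV)
    fix w assume wV: "w \<in> Mone n"
    have pw: "piH w \<in> Apoly n" using wV unfolding Mone_def Apoly_def by (rule piH_in)
    obtain m where hm: "\<forall>t\<ge>m. 1 * piH x ^ t * piH w \<in> Usub n k" using h pw one by blast
    have "vop (iterp x ns) s w \<in> Wsub n k" if ns: "set ns \<subseteq> {0, -1}" "s \<in> {0, -1}" "length ns \<ge> m" for ns s
    proof -
      have vV: "vop (iterp x ns) s w \<in> Mone n"
        using wV iterp_in[of x "2*n" ns] xV unfolding Mone_def by (intro vop_in)
      have "piH (vop (iterp x ns) s w) \<in> Usub n k"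
      proof (cases "s = 0")
        case True then show ?thesis using piH_vop_low U0 by simp
      next
        case False
        then have s: "s = -1" using ns(2) by simp
        have p: "1 * piH x ^ (length ns + 1) * piH w \<in> Usub n k" using hm ns(3) le_add1 le_trans by blast
        have z: "0 * piH w \<in> Usub n k" using U0 by simp
        show ?thesis unfolding s piH_vop_m1 piH_iterp[OF ns(1)] using p z
          by (simp only: mult_1_left split: if_split) blast
      qed
      then show ?thesis using MU[OF kn vV] by simp
    qed
    then show "\<exists>m. \<forall>ns s. set ns \<subseteq> {0, -1} \<and> s \<in> {0, -1} \<and> length ns \<ge> m
        \<longrightarrow> vop (iterp x ns) s w \<in> Wsub n k" by blast
  qed
  show "x \<in> sr01 (Mone n) (Wsub n k)" unfolding sr01_def using L R by blast
qed

theorem mainTheorem14: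
  fixes n k :: nat
  assumes "1 \<le> n" and "1 \<le> k" and "k \<le> n"
  shows "MZ01_subspace (Mone n) (Wsub n k) \<longleftrightarrow> MZ_subspace (Apoly n) (Usub n k)"
proof -
  let ?R = "rad_comm (Apoly n) (Usub n k)" and ?S = "srad_comm (Apoly n) (Usub n k)"
  have RA: "?R \<subseteq> Apoly n" unfolding rad_comm_def by blast
  have SA: "?S \<subseteq> Apoly n" unfolding srad_comm_def by blast
  have r: "r01 (Mone n) (Wsub n k) = {x \<in> Mone n. piH x \<in> ?R}"
    using r01_char[OF assms(3)] by blast
  have s: "sr01 (Mone n) (Wsub n k) = {x \<in> Mone n. piH x \<in> ?S}"
    using sr01_char[OF assms(3)] by blast
  have surj: "\<exists>x\<in>Mone n. piH x = g" if "g \<in> Apoly n" for g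
    using that sigma_in[of g "2*n"] piH_sigma[of g] unfolding Mone_def Apoly_def by blast
  show ?thesis
    unfolding MZ01_subspace_def MZ_subspace_def r s
  proof
    assume eq: "{x \<in> Mone n. piH x \<in> ?R} = {x \<in> Mone n. piH x \<in> ?S}"
    show "?R = ?S"
    proof (intro set_eqI iffI)
      fix g assume g: "g \<in> ?R"
      then obtain x where "x \<in> Mone n" "piH x = g" using surj RA by blast
      then show "g \<in> ?S" using eq g by blast
    next
      fix g assume g: "g \<in> ?S"
      then obtain x where "x \<in> Mone n" "piH x = g" using surj SA by blast
      then show "g \<in> ?R" using eq g by blast
    qed
  next
    assume "?R = ?S"
    then show "{x \<in> Mone n. piH x \<in> ?R} = {x \<in> Mone n. piH x \<in> ?S}" by simp
  qed
qed

end
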